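(* Let $S$ be a finite set of positive integers with at least $3$ elements, and suppose there are $a,b\in S$ with $a\ne b$ and $b\mid a$. Then $\Theta(S)\le\Theta(S\setminus\{b\})$, i.e. the modulus $b$ does not increase the robustness bound and may be deleted.
   Context: For a finite set $T$ of positive integers with at least two elements, the (single-stage) robustness bound is $\Theta(T)=\max_{x\in T}\min_{y\in T,\,y\ne x}\gcd(x,y)/4$. *)

theory Defs
  imports Complex_Main
begin

definition Theta :: "nat set \<Rightarrow> real" where
  "Theta T = (MAX x\<in>T. real (MIN y\<in>T - {x}. gcd x y)) / 4"

end

theory Submission
  imports Defs
begin

theorem corollary2:
  fixes S :: "nat set" and a b :: nat
  assumes "finite S" and "\<forall>x\<in>S. 0 < x" and "card S \<ge> 3"
    and "a \<in> S" and "b \<in> S" and "a \<noteq> b" and "b dvd a"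
  shows "Theta S \<le> Theta (S - {b})"
proof -
  have ne2: "\<And>u v. S - {u} - {v} \<noteq> {}"
  proof
    fix u v assume "S - {u} - {v} = {}"
    hence "S \<subseteq> {u, v}" by blast
    hence "card S \<le> card {u,v}" by (intro card_mono) auto
    also have "\<dots> \<le> 2" by (simp add: card_insert_le_m1)
    finally show False using assms(3) by simp
  qed
  have ne: "S - {b} - {a} \<noteq> {}" by (rule ne2)
  have key: "\<forall>x\<in>S. \<exists>x'\<in>S - {b}. (MIN y\<in>S - {x}. gcd x y) \<le> (MIN y\<in>S - {b} - {x'}. gcd x' y)"
  proof
    fix x assume x: "x \<in> S"
    show "\<exists>x'\<in>S - {b}. (MIN y\<in>S - {x}. gcd x y) \<le> (MIN y\<in>S - {b} - {x'}. gcd x' y)"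
    proof (cases "x = b")
      case False
      have "(MIN y\<in>S - {x}. gcd x y) \<le> (MIN y\<in>S - {b} - {x}. gcd x y)"
        by (rule Min_antimono) (use ne2[of x] assms(1) in auto)
      thus ?thesis using x False by blast
    next
      case True
      have "(MIN y\<in>S - {b}. gcd b y) \<le> (MIN y\<in>S - {b} - {a}. gcd a y)"
      proof (rule Min.boundedI)
        show "finite (gcd a ` (S - {b} - {a}))" using assms(1) by simp
        show "gcd a ` (S - {b} - {a}) \<noteq> {}" using ne by simp
        fix m assume "m \<in> gcd a ` (S - {b} - {a})"
        then obtain y where y: "y \<in> S - {b} - {a}" "m = gcd a y" by blast
        have "(MIN y\<in>S - {b}. gcd b y) \<le> gcd b y"
          using y assms(1) by (intro Min_le) auto
        also have "gcd b y \<le> gcd a y"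
        proof (rule dvd_imp_le)
          show "gcd b y dvd gcd a y"
            using assms(7) by (meson dvd_trans gcd_dvd1 gcd_dvd2 gcd_greatest)
          show "0 < gcd a y" using assms(2,4) by simp
        qed
        finally show "(MIN y\<in>S - {b}. gcd b y) \<le> m" using y by simp
      qed
      thus ?thesis using True assms(4,6) by blast
    qed
  qed
  have fin: "finite (S - {b})" using assms(1) by simp
  have "(MAX x\<in>S. real (MIN y\<in>S - {x}. gcd x y)) \<le> (MAX x\<in>S - {b}. real (MIN y\<in>S - {b} - {x}. gcd x y))"
  proof (rule Max.boundedI)
    show "finite ((\<lambda>x. real (MIN y\<in>S - {x}. gcd x y)) ` S)" using assms(1) by simp
    show "(\<lambda>x. real (MIN y\<in>S - {x}. gcd x y)) ` S \<noteq> {}" using assms(4) by blast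
    fix m assume "m \<in> (\<lambda>x. real (MIN y\<in>S - {x}. gcd x y)) ` S"
    then obtain x where x: "x \<in> S" "m = real (MIN y\<in>S - {x}. gcd x y)" by blast
    then obtain x' where x': "x' \<in> S - {b}" "(MIN y\<in>S - {x}. gcd x y) \<le> (MIN y\<in>S - {b} - {x'}. gcd x' y)"
      using key by blast
    have "m \<le> real (MIN y\<in>S - {b} - {x'}. gcd x' y)" using x x' by simp
    also have "\<dots> \<le> (MAX x\<in>S - {b}. real (MIN y\<in>S - {b} - {x}. gcd x y))"
      using fin x' by (intro Max_ge) auto
    finally show "m \<le> (MAX x\<in>S - {b}. real (MIN y\<in>S - {b} - {x}. gcd x y))" .
  qed
  thus ?thesis unfolding Theta_def by (simp add: divide_right_mono)
qed

end
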